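(* There exists a snowflaking function $h$ such that for every $n\in\mathbb N$ there is a metric space $(X_n,d_n)$ of cardinality $n$ for which $(X_n,h\circ d_n)$ admits an isometric embedding into the $2$-dimensional Euclidean space $\mathbb R^2$. In particular, no bound depending only on $h$ and the dimension can hold on the cardinality of a metric space whose $h$-snowflake embeds isometrically into a finite-dimensional normed space.
   Context: Let $\mathbb R_{\geq}=[0,\infty)$. A function $h:\mathbb R_{\geq}\to\mathbb R_{\geq}$ is called a snowflaking function if: (S1) $h(0)=0$; (S2) $h$ is concave; (S3) $h(t)/t\to\infty$ as $t\to0^+$; (S4) $h(t)/t\to 0$ as $t\to\infty$. For such $h$ and a metric $d$ on $X$, $h\circ d$ is again a metric on $X$; $(X,h\circ d)$ is called the $h$-snowflake of $(X,d)$. *)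

theory Defs
  imports "HOL-Analysis.Analysis"
begin

definition snowflaking :: "(real \<Rightarrow> real) \<Rightarrow> bool" where
  "snowflaking h \<longleftrightarrow>
     (\<forall>t\<ge>0. h t \<ge> 0) \<and>
     h 0 = 0 \<and>
     concave_on {0..} h \<and>
     filterlim (\<lambda>t. h t / t) at_top (at_right 0) \<and>
     ((\<lambda>t. h t / t) \<longlongrightarrow> 0) at_top"

definition metric_on :: "'a set \<Rightarrow> ('a \<Rightarrow> 'a \<Rightarrow> real) \<Rightarrow> bool" where
  "metric_on X d \<longleftrightarrow>
     (\<forall>x\<in>X. \<forall>y\<in>X. d x y \<ge> 0) \<and>
     (\<forall>x\<in>X. \<forall>y\<in>X. d x y = 0 \<longleftrightarrow> x = y) \<and>
     (\<forall>x\<in>X. \<forall>y\<in>X. d x y = d y x) \<and>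
     (\<forall>x\<in>X. \<forall>y\<in>X. \<forall>z\<in>X. d x z \<le> d x y + d y z)"

end

theory Submission imports Defs begin

definition gg :: "real \<Rightarrow> real" where "gg v = v * ln (1 + v)"

lemma gg_strict: assumes "0 \<le> x" "x < y" shows "gg x < gg y"
proof -
  have "ln (1+x) \<le> ln (1+y)" using assms by simp
  moreover have "ln (1+y) > 0" using assms by simp
  ultimately have "x * ln (1+x) \<le> x * ln (1+y)" using assms by (simp add: mult_left_mono)
  also have "\<dots> < y * ln (1+y)" using assms \<open>ln (1+y) > 0\<close> by simp
  finally show ?thesis unfolding gg_def .
qed

lemma gg_nonneg: "0 \<le> x \<Longrightarrow> 0 \<le> gg x"
  unfolding gg_def by simp

lemma gg_0[simp]: "gg 0 = 0" unfolding gg_def by simp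

lemma gg_surj: assumes "0 \<le> t" shows "\<exists>v\<ge>0. gg v = t"
proof -
  define b where "b = t + exp 1"
  have "exp 1 \<le> 1 + b" unfolding b_def using assms by simp
  hence "ln (exp 1) \<le> ln (1+b)" using exp_gt_zero[of 1] by (subst ln_le_cancel_iff) linarith+
  hence "ln (1+b) \<ge> 1" by simp
  moreover have "b \<ge> 0" unfolding b_def using assms exp_gt_zero[of 1] by linarith
  ultimately have "b * 1 \<le> b * ln (1+b)" by (intro mult_left_mono) auto
  hence "gg b \<ge> b" unfolding gg_def by simp
  hence "gg b \<ge> t" unfolding b_def using exp_gt_zero[of 1] by linarith
  moreover have "continuous_on {0..b} gg" unfolding gg_def
    by (intro continuous_intros) auto
  ultimately obtain v where "v \<ge> 0" "v \<le> b" "gg v = t"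
    using IVT'[of gg 0 t b] assms b_def exp_gt_zero[of 1] by auto
  thus ?thesis by auto
qed

definition hh :: "real \<Rightarrow> real" where
  "hh t = (if t < 0 then 0 else (THE v. 0 \<le> v \<and> gg v = t))"

lemma gg_inj: assumes "0 \<le> x" "0 \<le> y" "gg x = gg y" shows "x = y"
proof (rule ccontr)
  assume "x \<noteq> y"
  hence "x < y \<or> y < x" by linarith
  thus False using gg_strict[of x y] gg_strict[of y x] assms by auto
qed

lemma hh_gg: assumes "0 \<le> t" shows "0 \<le> hh t \<and> gg (hh t) = t"
proof -
  obtain v where v: "v \<ge> 0" "gg v = t" using gg_surj[OF assms] by auto
  have "(THE v. 0 \<le> v \<and> gg v = t) = v"
    by (rule the_equality) (use v gg_inj in auto)
  thus ?thesis using v assms unfolding hh_def by auto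
qed

lemma gg_hh: assumes "0 \<le> v" shows "hh (gg v) = v"
proof -
  have "0 \<le> hh (gg v)" "gg (hh (gg v)) = gg v" using hh_gg[OF gg_nonneg[OF assms]] by auto
  thus ?thesis using gg_inj assms by blast
qed

lemma gg_convex: "convex_on {0..} gg"
proof (rule convex_on_realI[where f'="\<lambda>v. ln (1+v) + v/(1+v)"])
  show "connected {0::real..}" by simp
next
  fix x :: real assume "x \<in> {0..}"
  hence "x \<ge> 0" by simp
  show "(gg has_real_derivative ln (1+x) + x/(1+x)) (at x)"
    unfolding gg_def
    by (rule derivative_eq_intros refl | use \<open>x\<ge>0\<close> in \<open>simp add: field_simps\<close>)+
next
  fix x y :: real assume "x \<in> {0..}" "y \<in> {0..}" "x \<le> y"
  moreover have "x/(1+x) \<le> y/(1+y)" using calculation by (simp add: field_simps)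
  moreover have "ln (1+x) \<le> ln (1+y)" using calculation by simp
  ultimately show "ln (1+x) + x/(1+x) \<le> ln (1+y) + y/(1+y)" by linarith
qed

lemma gg_le_iff: assumes "0 \<le> x" "0 \<le> y" shows "gg x \<le> gg y \<longleftrightarrow> x \<le> y"
proof
  assume "gg x \<le> gg y" thus "x \<le> y" using gg_strict[of y x] assms by force
next
  assume "x \<le> y" thus "gg x \<le> gg y" using gg_strict[of x y] assms
    by (cases "x = y") auto
qed

lemma hh_concave: "concave_on {0..} hh"
  unfolding concave_on_def
proof (rule convex_onI)
  fix x y u :: real assume xy: "x \<in> {0..}" "y \<in> {0..}" and u: "0 < u" "u < 1"
  define a where "a = hh x" define b where "b = hh y"
  have a: "a \<ge> 0" "gg a = x" using hh_gg xy a_def by auto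
  have b: "b \<ge> 0" "gg b = y" using hh_gg xy b_def by auto
  have z: "(1-u)*x + u*y \<ge> 0" using xy u by auto
  have "gg ((1-u)*a + u*b) \<le> (1-u) * gg a + u * gg b"
    using convex_onD[OF gg_convex, of u a b] a b u by (simp add: convex_real_interval)
  also have "\<dots> = gg (hh ((1-u)*x + u*y))" using hh_gg[OF z] a b by simp
  finally have le: "gg ((1-u)*a + u*b) \<le> gg (hh ((1-u)*x + u*y))" .
  have "0 \<le> (1-u)*a + u*b" using a b u by simp
  hence "(1-u)*a + u*b \<le> hh ((1-u)*x + u*y)" using gg_le_iff hh_gg[OF z] le by blast
  thus "- hh ((1 - u) *\<^sub>R x + u *\<^sub>R y) \<le> (1 - u) * - hh x + u * - hh y"
    using a_def b_def by simp
qed simp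

lemma hh_pos: assumes "0 < t" shows "0 < hh t"
proof -
  have "0 \<le> hh t" "gg (hh t) = t" using hh_gg assms by auto
  thus ?thesis using assms by (cases "hh t = 0") auto
qed

lemma hh_ratio: assumes "0 < t" shows "hh t / t = 1 / ln (1 + hh t)"
proof -
  have g: "gg (hh t) = t" using hh_gg assms by auto
  have p: "0 < hh t" using hh_pos assms by auto
  hence "ln (1 + hh t) > 0" by simp
  have "hh t / t = hh t / (hh t * ln (1 + hh t))" using g unfolding gg_def by simp
  thus ?thesis using p by simp
qed

lemma hh_lt_iff: assumes "0 \<le> t" "0 \<le> v" shows "hh t < v \<longleftrightarrow> t < gg v"
proof -
  have "0 \<le> hh t" "gg (hh t) = t" using hh_gg assms by auto
  thus ?thesis using gg_le_iff[of v "hh t"] assms by auto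
qed

lemma hh_snow1: "filterlim (\<lambda>t. hh t / t) at_top (at_right 0)"
  unfolding filterlim_at_top
proof
  fix Z :: real
  define Z' where "Z' = max Z 1"
  define \<delta> where "\<delta> = exp (1/Z') - 1"
  have Z': "Z' > 0" "Z \<le> Z'" unfolding Z'_def by auto
  have dpos: "\<delta> > 0" unfolding \<delta>_def using Z' by simp
  have gpos: "gg \<delta> > 0" using gg_strict[of 0 \<delta>] dpos by simp
  have "\<forall>\<^sub>F t in at_right 0. t \<in> {0<..<gg \<delta>}" using eventually_at_right_real[OF gpos] .
  thus "\<forall>\<^sub>F t in at_right 0. Z \<le> hh t / t"
  proof (rule eventually_mono)
    fix t assume "t \<in> {0<..<gg \<delta>}"
    hence t: "0 < t" "t < gg \<delta>" by auto
    hence "hh t < \<delta>" using hh_lt_iff[of t \<delta>] dpos by auto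
    hence "1 + hh t < exp (1/Z')" unfolding \<delta>_def by simp
    moreover have hp: "0 < hh t" using hh_pos t by auto
    ultimately have "ln (1 + hh t) < ln (exp (1/Z'))" by (subst ln_less_cancel_iff) auto
    hence "ln (1 + hh t) < 1/Z'" by simp
    moreover have "0 < ln (1 + hh t)" using hp by simp
    ultimately have "Z' < 1 / ln (1 + hh t)" using Z' by (simp add: field_simps)
    thus "Z \<le> hh t / t" using hh_ratio[OF t(1)] Z' by simp
  qed
qed

lemma hh_snow2: "((\<lambda>t. hh t / t) \<longlongrightarrow> 0) at_top"
proof (rule order_tendstoI)
  fix a :: real assume "a < 0"
  show "\<forall>\<^sub>F t in at_top. a < hh t / t"
    using eventually_gt_at_top[of 0]
    by (rule eventually_mono) (use \<open>a < 0\<close> hh_pos in \<open>auto intro: divide_pos_pos less_trans\<close>)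
next
  fix a :: real assume a: "0 < a"
  define \<delta> where "\<delta> = exp (1/a)"
  have dpos: "\<delta> > 0" unfolding \<delta>_def by simp
  show "\<forall>\<^sub>F t in at_top. hh t / t < a"
    using eventually_gt_at_top[of "gg \<delta>"]
  proof (rule eventually_mono)
    fix t assume t: "gg \<delta> < t"
    have t0: "0 < t" using t gg_nonneg[of \<delta>] dpos by linarith
    have "\<not> hh t < \<delta>" using hh_lt_iff[of t \<delta>] dpos t t0 by auto
    hence "exp (1/a) \<le> hh t" unfolding \<delta>_def by simp
    hence "exp (1/a) < 1 + hh t" by simp
    hence "ln (exp (1/a)) < ln (1 + hh t)" using exp_gt_zero[of "1/a"] by (subst ln_less_cancel_iff) linarith+
    hence L: "1/a < ln (1 + hh t)" by simp
    have Lp: "0 < ln (1 + hh t)" using L a by (meson less_trans zero_less_divide_1_iff)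
    have "a * (1/a) < a * ln (1 + hh t)" using mult_strict_left_mono[OF L a] .
    hence "1 < a * ln (1 + hh t)" using a by simp
    hence "1 / ln (1 + hh t) < a" using Lp by (simp add: divide_less_eq mult.commute)
    thus "hh t / t < a" using hh_ratio[OF t0] by simp
  qed
qed

lemma lnratio: assumes a: "(a::real) > 0" shows "((\<lambda>x. ln(1+x*a)/ln x) \<longlongrightarrow> 1) at_top"
proof -
  have "((\<lambda>x. inverse x + a) \<longlongrightarrow> 0 + a) at_top"
    by (intro tendsto_intros tendsto_inverse_0_at_top filterlim_ident)
  hence "((\<lambda>x. ln (inverse x + a)) \<longlongrightarrow> ln (0 + a)) at_top"
    using a by (intro tendsto_ln) auto
  hence "((\<lambda>x. ln (inverse x + a) / ln x) \<longlongrightarrow> 0) at_top"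
    by (rule tendsto_divide_0) (rule filterlim_at_top_imp_at_infinity[OF ln_at_top])
  hence lim: "((\<lambda>x. 1 + ln (inverse x + a) / ln x) \<longlongrightarrow> 1 + 0) at_top"
    by (intro tendsto_intros)
  have ev: "\<forall>\<^sub>F x in at_top. 1 + ln (inverse x + a) / ln x = ln(1+x*a)/ln x"
    using eventually_gt_at_top[of "1::real"]
  proof (rule eventually_mono)
    fix x :: real assume x: "1 < x"
    have "1 + x*a = x * (inverse x + a)" using x by (simp add: field_simps)
    moreover have "inverse x + a > 0" using x a by (simp add: add_pos_pos)
    ultimately have "ln (1 + x*a) = ln x + ln (inverse x + a)" using x by (simp add: ln_mult)
    moreover have "ln x > 0" using x by simp
    ultimately show "1 + ln (inverse x + a) / ln x = ln(1+x*a)/ln x" by (simp add: field_simps)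
  qed
  show ?thesis using tendsto_cong[OF ev] lim by simp
qed

lemma triple_ev:
  fixes a b c :: real
  assumes "0 < a" "0 < b" "0 < c" "c < a + b"
  shows "\<forall>\<^sub>F x in at_top. gg (x*c) \<le> gg (x*a) + gg (x*b)"
proof -
  have "((\<lambda>x. a * (ln(1+x*a)/ln x) + b*(ln(1+x*b)/ln x) - c*(ln(1+x*c)/ln x)) \<longlongrightarrow> a*1+b*1-c*1) at_top"
    by (intro tendsto_intros lnratio assms)
  from order_tendstoD(1)[OF this, of 0] have "\<forall>\<^sub>F x in at_top. 0 < a * (ln(1+x*a)/ln x) + b*(ln(1+x*b)/ln x) - c*(ln(1+x*c)/ln x)"
    using assms by simp
  moreover have "\<forall>\<^sub>F x in at_top. (1::real) < x" by (rule eventually_gt_at_top)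
  ultimately show ?thesis
  proof eventually_elim
    case (elim x)
    have l: "0 < ln x" using elim by simp
    have "0 < (a * ln(1+x*a) + b* ln(1+x*b) - c* ln(1+x*c)) / ln x"
      using elim(1) by (simp add: diff_divide_distrib add_divide_distrib)
    hence "0 < a * ln(1+x*a) + b* ln(1+x*b) - c* ln(1+x*c)" using l
      by (simp add: zero_less_divide_iff)
    hence "x * (c* ln(1+x*c)) \<le> x * (a * ln(1+x*a) + b* ln(1+x*b))" using elim(2)
      by (intro mult_left_mono) auto
    thus ?case unfolding gg_def by (simp add: algebra_simps)
  qed
qed

definition pt :: "nat \<Rightarrow> real^2" where "pt i = vector [real i, (real i)^2]"

lemma pt_dist_pos: "i \<noteq> j \<Longrightarrow> 0 < dist (pt i) (pt j)"
proof -
  assume "i \<noteq> j"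
  hence "pt i $ 1 \<noteq> pt j $ 1" unfolding pt_def by simp
  hence "pt i \<noteq> pt j" by auto
  thus ?thesis by simp
qed

lemma pt_strict:
  assumes "i \<noteq> j" "j \<noteq> k" "i \<noteq> k"
  shows "dist (pt i) (pt k) < dist (pt i) (pt j) + dist (pt j) (pt k)"
proof -
  define x where "x = pt i - pt j"
  define y where "y = pt j - pt k"
  have le: "norm (x + y) \<le> norm x + norm y" by (rule norm_triangle_ineq)
  have ne: "norm (x + y) \<noteq> norm x + norm y"
  proof
    assume "norm (x + y) = norm x + norm y"
    hence eq: "norm x *\<^sub>R y = norm y *\<^sub>R x" by (simp add: norm_triangle_eq)
    have nx: "norm x > 0" using pt_dist_pos[OF assms(1)] unfolding x_def dist_norm .
    have e1: "norm x * (y$1) = norm y * (x$1)" using arg_cong[OF eq, of "\<lambda>v. v$1"] by simp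
    have e2: "norm x * (y$2) = norm y * (x$2)" using arg_cong[OF eq, of "\<lambda>v. v$2"] by simp
    have "norm x * ((x$1)*(y$2) - (x$2)*(y$1)) = (x$1)*(norm x * y$2) - (x$2)*(norm x * y$1)"
      by (simp add: algebra_simps)
    also have "\<dots> = 0" using e1 e2 by (simp add: algebra_simps)
    finally have cr: "(x$1)*(y$2) - (x$2)*(y$1) = 0" using nx by simp
    have "(x$1)*(y$2) - (x$2)*(y$1) = (real i - real j) * (real j - real k) * (real k - real i)"
      unfolding x_def y_def pt_def by (simp add: algebra_simps power2_eq_square)
    moreover have "(real i - real j) * (real j - real k) * (real k - real i) \<noteq> 0" using assms by simp
    ultimately show False using cr by simp
  qed
  have "x + y = pt i - pt k" unfolding x_def y_def by simp
  thus ?thesis using le ne unfolding dist_norm x_def y_def by (simp add: less_le)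
qed

lemma hh_snowflaking:
  "(\<forall>t\<ge>0. hh t \<ge> 0) \<and> hh 0 = 0 \<and> concave_on {0..} hh \<and>
   filterlim (\<lambda>t. hh t / t) at_top (at_right 0) \<and> ((\<lambda>t. hh t / t) \<longlongrightarrow> 0) at_top"
  using hh_gg gg_hh[of 0] hh_concave hh_snow1 hh_snow2 by auto

lemma config:
  "\<exists>(X::nat set) (d::nat \<Rightarrow> nat \<Rightarrow> real) (f::nat \<Rightarrow> real^2).
     finite X \<and> card X = n \<and>
     (\<forall>x\<in>X. \<forall>y\<in>X. d x y \<ge> 0) \<and>
     (\<forall>x\<in>X. \<forall>y\<in>X. d x y = 0 \<longleftrightarrow> x = y) \<and>
     (\<forall>x\<in>X. \<forall>y\<in>X. d x y = d y x) \<and>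
     (\<forall>x\<in>X. \<forall>y\<in>X. \<forall>z\<in>X. d x z \<le> d x y + d y z) \<and>
     (\<forall>x\<in>X. \<forall>y\<in>X. dist (f x) (f y) = hh (d x y))"
proof -
  define T where "T = {(i,j,k). i < n \<and> j < n \<and> k < n \<and> i \<noteq> j \<and> j \<noteq> k \<and> i \<noteq> k}"
  have fT: "finite T" by (rule finite_subset[of _ "{0..<n} \<times> {0..<n} \<times> {0..<n}"]) (auto simp: T_def)
  have "\<forall>t\<in>T. \<forall>\<^sub>F x in at_top. (case t of (i,j,k) \<Rightarrow>
      gg (x * dist (pt i) (pt k)) \<le> gg (x * dist (pt i) (pt j)) + gg (x * dist (pt j) (pt k)))"
  proof
    fix t assume "t \<in> T"
    then obtain i j k where t: "t = (i,j,k)" "i \<noteq> j" "j \<noteq> k" "i \<noteq> k" unfolding T_def by auto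
    show "\<forall>\<^sub>F x in at_top. (case t of (i,j,k) \<Rightarrow>
      gg (x * dist (pt i) (pt k)) \<le> gg (x * dist (pt i) (pt j)) + gg (x * dist (pt j) (pt k)))"
      unfolding t(1) using triple_ev[OF pt_dist_pos pt_dist_pos pt_dist_pos pt_strict] t by simp
  qed
  from eventually_ball_finite[OF fT this]
  have "\<forall>\<^sub>F x in at_top. (\<forall>t\<in>T. (case t of (i,j,k) \<Rightarrow>
      gg (x * dist (pt i) (pt k)) \<le> gg (x * dist (pt i) (pt j)) + gg (x * dist (pt j) (pt k)))) \<and> 0 < x"
    by (intro eventually_conj eventually_gt_at_top) auto
  then obtain N where N: "\<And>x. x \<ge> N \<Longrightarrow> (\<forall>t\<in>T. (case t of (i,j,k) \<Rightarrow>
      gg (x * dist (pt i) (pt k)) \<le> gg (x * dist (pt i) (pt j)) + gg (x * dist (pt j) (pt k)))) \<and> 0 < x"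
    unfolding eventually_at_top_linorder by blast
  define l where "l = N"
  have lp: "0 < l" using N[of N] l_def by simp
  have trip: "\<And>i j k. (i,j,k) \<in> T \<Longrightarrow>
      gg (l * dist (pt i) (pt k)) \<le> gg (l * dist (pt i) (pt j)) + gg (l * dist (pt j) (pt k))"
    using N[of N] l_def by fastforce
  define d where "d i j = gg (l * dist (pt i) (pt j))" for i j
  define f where "f i = l *\<^sub>R pt i" for i
  have dnn: "\<And>i j. 0 \<le> d i j" unfolding d_def using lp by (intro gg_nonneg) simp
  have d0: "\<And>i j. d i j = 0 \<longleftrightarrow> i = j"
  proof -
    fix i j :: nat
    show "d i j = 0 \<longleftrightarrow> i = j"
    proof (cases "i = j")
      case False
      hence "0 < l * dist (pt i) (pt j)" using lp pt_dist_pos by simp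
      hence "gg 0 < gg (l * dist (pt i) (pt j))" by (intro gg_strict) auto
      thus ?thesis using False unfolding d_def by simp
    qed (simp add: d_def)
  qed
  have dsym: "\<And>i j. d i j = d j i" unfolding d_def by (simp add: dist_commute)
  have dtri: "d i k \<le> d i j + d j k" if "i < n" "j < n" "k < n" for i j k
  proof -
    consider "i = k" | "i = j" | "j = k" | "i \<noteq> j \<and> j \<noteq> k \<and> i \<noteq> k" by blast
    thus ?thesis
    proof cases
      case 1 thus ?thesis using d0 dnn by (metis add_nonneg_nonneg order_refl)
    next
      case 2 thus ?thesis using d0 dnn by simp
    next
      case 3 thus ?thesis using d0 dnn by simp
    next
      case 4 hence "(i,j,k) \<in> T" using that unfolding T_def by auto
      thus ?thesis using trip unfolding d_def by blast
    qed
  qed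
  have emb: "dist (f i) (f j) = hh (d i j)" for i j
  proof -
    have "dist (f i) (f j) = l * dist (pt i) (pt j)"
      unfolding f_def dist_norm using lp
      by (simp add: scaleR_diff_right[symmetric])
    also have "\<dots> = hh (d i j)" unfolding d_def using lp by (intro gg_hh[symmetric]) simp
    finally show ?thesis .
  qed
  have fin: "finite {0..<n} \<and> card {0..<n} = n \<and>
     (\<forall>x\<in>{0..<n}. \<forall>y\<in>{0..<n}. d x y \<ge> 0) \<and>
     (\<forall>x\<in>{0..<n}. \<forall>y\<in>{0..<n}. d x y = 0 \<longleftrightarrow> x = y) \<and>
     (\<forall>x\<in>{0..<n}. \<forall>y\<in>{0..<n}. d x y = d y x) \<and>
     (\<forall>x\<in>{0..<n}. \<forall>y\<in>{0..<n}. \<forall>z\<in>{0..<n}. d x z \<le> d x y + d y z) \<and>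
     (\<forall>x\<in>{0..<n}. \<forall>y\<in>{0..<n}. dist (f x) (f y) = hh (d x y))"
  proof (intro conjI ballI)
    fix x y z assume "x \<in> {0..<n}" "y \<in> {0..<n}" "z \<in> {0..<n}"
    thus "d x z \<le> d x y + d y z" using dtri by simp
  qed (use dnn d0 dsym emb in simp_all)
  show ?thesis
    apply (rule exI[of _ "{0..<n}"])
    apply (rule exI[of _ d])
    apply (rule exI[of _ f])
    by (rule fin)
qed

theorem mainTheorem10:
  shows "\<exists>h. snowflaking h \<and>
           (\<forall>n::nat. \<exists>(X::nat set) (d::nat \<Rightarrow> nat \<Rightarrow> real) (f::nat \<Rightarrow> real^2).
              finite X \<and> card X = n \<and> metric_on X d \<and>
              (\<forall>x\<in>X. \<forall>y\<in>X. dist (f x) (f y) = h (d x y)))"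
proof (rule exI[of _ hh], rule conjI)
  show "snowflaking hh" unfolding snowflaking_def by (rule hh_snowflaking)
next
  show "\<forall>n::nat. \<exists>(X::nat set) (d::nat \<Rightarrow> nat \<Rightarrow> real) (f::nat \<Rightarrow> real^2).
              finite X \<and> card X = n \<and> metric_on X d \<and>
              (\<forall>x\<in>X. \<forall>y\<in>X. dist (f x) (f y) = hh (d x y))"
    unfolding metric_on_def conj_assoc by (rule allI, rule config)
qed

end
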